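(* Let $H$ be an undirected graph (possibly with loops), let $T$ be a tree with at least $2$ vertices and an arbitrarily chosen root $r$, and let $\alpha,\beta$ be two $H$-colorings of $T$. Then $\alpha$ can be reconfigured to $\beta$ if and only if there is a walk of even length in $H$ between $\alpha(r)$ and $\beta(r)$.
   Context: Undirected graphs are treated as digraphs with arcs in both directions for every edge. An $H$-coloring of $T$ is a map $c:V(T)\to V(H)$ such that for every edge $uv$ of $T$, $c(u)c(v)$ is an edge of $H$ (possibly a loop if $c(u)=c(v)$). $\alpha$ can be reconfigured to $\beta$ if there is a sequence of $H$-colorings of $T$ from $\alpha$ to $\beta$ in which consecutive colorings differ on exactly one vertex. A walk of length $0$ (when $\alpha(r)=\beta(r)$) counts as even. *)

theory Defs
  imports Main "HOL-Library.FuncSet"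
begin

text \<open>Undirected graphs are given by a vertex set and a symmetric edge relation
  (a set of ordered pairs containing both orientations of every edge).
  A loop at x is the pair (x,x).\<close>

definition undirected_graph :: "'a set \<Rightarrow> ('a \<times> 'a) set \<Rightarrow> bool" where
  "undirected_graph V E \<longleftrightarrow> E \<subseteq> V \<times> V \<and> sym E"

definition is_cycle :: "('a \<times> 'a) set \<Rightarrow> 'a list \<Rightarrow> bool" where
  "is_cycle E xs \<longleftrightarrow> length xs \<ge> 3 \<and> distinct xs
     \<and> (\<forall>i. Suc i < length xs \<longrightarrow> (xs ! i, xs ! Suc i) \<in> E)
     \<and> (last xs, hd xs) \<in> E"

definition is_tree :: "'a set \<Rightarrow> ('a \<times> 'a) set \<Rightarrow> bool" where
  "is_tree V E \<longleftrightarrow> finite V \<and> V \<noteq> {} \<and> undirected_graph V E \<and> irrefl E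
     \<and> (\<forall>u\<in>V. \<forall>v\<in>V. (u, v) \<in> E\<^sup>*)
     \<and> \<not> (\<exists>xs. is_cycle E xs)"

definition H_coloring ::
  "'a set \<Rightarrow> ('a \<times> 'a) set \<Rightarrow> 'b set \<Rightarrow> ('b \<times> 'b) set \<Rightarrow> ('a \<Rightarrow> 'b) \<Rightarrow> bool" where
  "H_coloring VT ET VH EH c \<longleftrightarrow> c \<in> VT \<rightarrow>\<^sub>E VH \<and> (\<forall>(u, v)\<in>ET. (c u, c v) \<in> EH)"

definition differ_on_one :: "'a set \<Rightarrow> ('a \<Rightarrow> 'b) \<Rightarrow> ('a \<Rightarrow> 'b) \<Rightarrow> bool" where
  "differ_on_one VT c d \<longleftrightarrow> (\<exists>!v. v \<in> VT \<and> c v \<noteq> d v)"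

definition reconfigurable ::
  "'a set \<Rightarrow> ('a \<times> 'a) set \<Rightarrow> 'b set \<Rightarrow> ('b \<times> 'b) set \<Rightarrow> ('a \<Rightarrow> 'b) \<Rightarrow> ('a \<Rightarrow> 'b) \<Rightarrow> bool" where
  "reconfigurable VT ET VH EH \<alpha> \<beta> \<longleftrightarrow>
     (\<exists>cs. cs \<noteq> [] \<and> hd cs = \<alpha> \<and> last cs = \<beta>
        \<and> (\<forall>c\<in>set cs. H_coloring VT ET VH EH c)
        \<and> (\<forall>i. Suc i < length cs \<longrightarrow> differ_on_one VT (cs ! i) (cs ! Suc i)))"

text \<open>A walk in H given by its list of vertices; its length is (number of vertices - 1).\<close>

definition is_walk :: "'b set \<Rightarrow> ('b \<times> 'b) set \<Rightarrow> 'b list \<Rightarrow> bool" where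
  "is_walk VH EH xs \<longleftrightarrow> xs \<noteq> [] \<and> set xs \<subseteq> VH
     \<and> (\<forall>i. Suc i < length xs \<longrightarrow> (xs ! i, xs ! Suc i) \<in> EH)"

definition even_walk :: "'b set \<Rightarrow> ('b \<times> 'b) set \<Rightarrow> 'b \<Rightarrow> 'b \<Rightarrow> bool" where
  "even_walk VH EH x y \<longleftrightarrow>
     (\<exists>xs. is_walk VH EH xs \<and> hd xs = x \<and> last xs = y \<and> even (length xs - 1))"

end

theory Submission
  imports Defs
begin

definition Step :: "'a set \<Rightarrow> ('a \<times> 'a) set \<Rightarrow> 'b set \<Rightarrow> ('b \<times> 'b) set
   \<Rightarrow> (('a \<Rightarrow> 'b) \<times> ('a \<Rightarrow> 'b)) set" where
  "Step VT ET VH EH = {(c,d). H_coloring VT ET VH EH c \<and> H_coloring VT ET VH EH d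
      \<and> (\<exists>v\<in>VT. \<forall>x\<in>VT. x \<noteq> v \<longrightarrow> c x = d x)}"

definition W2 :: "('b \<times> 'b) set \<Rightarrow> ('b \<times> 'b) set" where
  "W2 EH = {(x,z). \<exists>y. (x,y) \<in> EH \<and> (y,z) \<in> EH}"

lemma recon_to_star:
  assumes "reconfigurable VT ET VH EH \<alpha> \<beta>"
  shows "(\<alpha>, \<beta>) \<in> (Step VT ET VH EH)\<^sup>*"
proof -
  obtain cs where cs: "cs \<noteq> []" "hd cs = \<alpha>" "last cs = \<beta>"
    "\<forall>c\<in>set cs. H_coloring VT ET VH EH c"
    "\<forall>i. Suc i < length cs \<longrightarrow> differ_on_one VT (cs ! i) (cs ! Suc i)"
    using assms unfolding reconfigurable_def by blast
  have "\<forall>i. i < length cs \<longrightarrow> (hd cs, cs ! i) \<in> (Step VT ET VH EH)\<^sup>*"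
  proof
    fix i show "i < length cs \<longrightarrow> (hd cs, cs ! i) \<in> (Step VT ET VH EH)\<^sup>*"
    proof (induction i)
      case 0 then show ?case using cs(1) by (simp add: hd_conv_nth)
    next
      case (Suc i)
      show ?case
      proof
        assume i: "Suc i < length cs"
        then have d: "differ_on_one VT (cs ! i) (cs ! Suc i)" using cs(5) by blast
        then obtain v where v: "v \<in> VT" "(cs ! i) v \<noteq> (cs ! Suc i) v"
          and u: "\<And>w. w \<in> VT \<and> (cs ! i) w \<noteq> (cs ! Suc i) w \<Longrightarrow> w = v"
          unfolding differ_on_one_def by blast
        have "(cs ! i, cs ! Suc i) \<in> Step VT ET VH EH"
          unfolding Step_def using v u cs(4) i
          by (auto intro!: bexI[of _ v] simp: nth_mem)
        then show "(hd cs, cs ! Suc i) \<in> (Step VT ET VH EH)\<^sup>*"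
          using Suc i by (meson Suc_lessD rtrancl.rtrancl_into_rtrancl)
      qed
    qed
  qed
  then show ?thesis using cs
    by (metis One_nat_def diff_Suc_less last_conv_nth length_greater_0_conv)
qed

lemma star_to_recon:
  assumes "(\<alpha>, \<beta>) \<in> (Step VT ET VH EH)\<^sup>*" and "H_coloring VT ET VH EH \<alpha>"
  shows "reconfigurable VT ET VH EH \<alpha> \<beta>"
  using assms(1)
proof (induction rule: rtrancl_induct)
  case base
  show ?case unfolding reconfigurable_def using assms(2)
    by (intro exI[of _ "[\<alpha>]"]) auto
next
  case (step c d)
  obtain cs where cs: "cs \<noteq> []" "hd cs = \<alpha>" "last cs = c"
    "\<forall>c\<in>set cs. H_coloring VT ET VH EH c"
    "\<forall>i. Suc i < length cs \<longrightarrow> differ_on_one VT (cs ! i) (cs ! Suc i)"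
    using step.IH unfolding reconfigurable_def by blast
  show ?case
  proof (cases "c = d")
    case True then show ?thesis using step.IH by simp
  next
    case False
    from step.hyps(2) have hc: "H_coloring VT ET VH EH c" "H_coloring VT ET VH EH d"
      and ex: "\<exists>v\<in>VT. \<forall>x\<in>VT. x \<noteq> v \<longrightarrow> c x = d x"
      unfolding Step_def by auto
    obtain v where v: "v \<in> VT" "\<forall>x\<in>VT. x \<noteq> v \<longrightarrow> c x = d x" using ex by blast
    have "\<exists>x\<in>VT. c x \<noteq> d x"
    proof (rule ccontr)
      assume "\<not> ?thesis"
      then have "c = d" using hc unfolding H_coloring_def by (metis PiE_ext)
      then show False using False by simp
    qed
    then obtain w where w: "w \<in> VT" "c w \<noteq> d w" by blast
    then have "w = v" using v by blast
    then have dif: "differ_on_one VT c d" unfolding differ_on_one_def using v w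
      by (intro ex1I[of _ v]) auto
    show ?thesis unfolding reconfigurable_def
    proof (intro exI[of _ "cs @ [d]"] conjI)
      show "\<forall>i. Suc i < length (cs @ [d]) \<longrightarrow> differ_on_one VT ((cs @ [d]) ! i) ((cs @ [d]) ! Suc i)"
      proof (intro allI impI)
        fix i assume i: "Suc i < length (cs @ [d])"
        show "differ_on_one VT ((cs @ [d]) ! i) ((cs @ [d]) ! Suc i)"
        proof (cases "Suc i < length cs")
          case True then show ?thesis using cs(5) by (simp add: nth_append)
        next
          case False
          then have "Suc i = length cs" using i by simp
          then have "i = length cs - 1" by simp
          then have "cs ! i = c" using cs(1,3) by (simp add: last_conv_nth)
          then show ?thesis using dif \<open>Suc i = length cs\<close> by (simp add: nth_append)
        qed
      qed
    qed (use cs hc in auto)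
  qed
qed

lemma is_walk_Cons2:
  "is_walk VH EH (a # b # xs) \<longleftrightarrow> a \<in> VH \<and> (a, b) \<in> EH \<and> is_walk VH EH (b # xs)"
proof
  assume "is_walk VH EH (a # b # xs)"
  then show "a \<in> VH \<and> (a, b) \<in> EH \<and> is_walk VH EH (b # xs)"
    unfolding is_walk_def by (auto; metis Suc_less_eq length_Cons nth_Cons_Suc)
next
  assume h: "a \<in> VH \<and> (a, b) \<in> EH \<and> is_walk VH EH (b # xs)"
  show "is_walk VH EH (a # b # xs)"
    unfolding is_walk_def
  proof (intro conjI allI impI)
    fix i assume "Suc i < length (a # b # xs)"
    then show "((a # b # xs) ! i, (a # b # xs) ! Suc i) \<in> EH"
      using h unfolding is_walk_def by (cases i) auto
  qed (use h in \<open>auto simp: is_walk_def\<close>)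
qed

lemma walk_W2: "is_walk VH EH xs \<Longrightarrow> even (length xs - 1) \<Longrightarrow> (hd xs, last xs) \<in> (W2 EH)\<^sup>*"
proof (induction xs rule: induct_list012)
  case (3 x y zs)
  show ?case
  proof (cases zs)
    case Nil then show ?thesis using 3 by simp
  next
    case (Cons z zs')
    have w: "(x,y) \<in> EH" "(y,z) \<in> EH" "is_walk VH EH zs"
      using "3.prems"(1) Cons by (auto simp: is_walk_Cons2)
    have "(hd zs, last zs) \<in> (W2 EH)\<^sup>*" using 3 w Cons by simp
    moreover have "(x, z) \<in> W2 EH" using w unfolding W2_def by blast
    ultimately show ?thesis using Cons by (simp add: converse_rtrancl_into_rtrancl)
  qed
qed (auto simp: is_walk_def)

lemma W2_walk:
  assumes "(x, z) \<in> (W2 EH)\<^sup>*" "z \<in> VH" "EH \<subseteq> VH \<times> VH"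
  shows "even_walk VH EH x z"
  using assms(1)
proof (induction rule: converse_rtrancl_induct)
  case base
  show ?case unfolding even_walk_def is_walk_def using assms(2)
    by (intro exI[of _ "[z]"]) auto
next
  case (step x y)
  obtain ys where ys: "is_walk VH EH ys" "hd ys = y" "last ys = z" "even (length ys - 1)"
    using step.IH unfolding even_walk_def by blast
  obtain m where m: "(x,m) \<in> EH" "(m,y) \<in> EH" using step.hyps(1) unfolding W2_def by blast
  have ne: "ys \<noteq> []" using ys(1) unfolding is_walk_def by simp
  then have ys_eq: "ys = y # tl ys" using ys(2) by (metis list.collapse)
  have "is_walk VH EH (x # m # ys)"
    using m ys(1) assms(3) ys_eq by (subst ys_eq, subst is_walk_Cons2, subst is_walk_Cons2) auto
  moreover have "even (length (x # m # ys) - 1)" using ys(4) ne by (cases ys) auto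
  ultimately show ?case unfolding even_walk_def using ys ne by (intro exI[of _ "x # m # ys"]) auto
qed


lemma tree_basic:
  assumes "is_tree V E"
  shows "finite V" "E \<subseteq> V \<times> V" "sym E" "irrefl E" "\<And>u v. u \<in> V \<Longrightarrow> v \<in> V \<Longrightarrow> (u,v) \<in> E\<^sup>*"
    "\<And>xs. \<not> is_cycle E xs"
  using assms unfolding is_tree_def undirected_graph_def by auto

lemma tree_nbr:
  assumes "is_tree V E" "card V \<ge> 2" "u \<in> V"
  shows "\<exists>w. (u,w) \<in> E"
proof -
  have "\<not> V \<subseteq> {u}"
  proof
    assume "V \<subseteq> {u}"
    then have "card V \<le> card {u}" by (intro card_mono) auto
    then show False using assms(2) by simp
  qed
  then obtain v where v: "v \<in> V" "v \<noteq> u" by blast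
  have "(u,v) \<in> E\<^sup>*" using tree_basic(5)[OF assms(1)] assms(3) v by blast
  then show ?thesis using v(2) by (cases rule: converse_rtranclE) auto
qed

definition is_path :: "'a set \<Rightarrow> ('a \<times> 'a) set \<Rightarrow> 'a list \<Rightarrow> bool" where
  "is_path V E xs \<longleftrightarrow> xs \<noteq> [] \<and> distinct xs \<and> set xs \<subseteq> V
     \<and> (\<forall>i. Suc i < length xs \<longrightarrow> (xs ! i, xs ! Suc i) \<in> E)"

lemma path_rev:
  assumes "is_path V E xs" "sym E"
  shows "is_path V E (rev xs)"
  unfolding is_path_def
proof (intro conjI allI impI)
  fix i assume i: "Suc i < length (rev xs)"
  let ?n = "length xs"
  have "(xs ! (?n - Suc (Suc i)), xs ! Suc (?n - Suc (Suc i))) \<in> E"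
    using assms(1) i unfolding is_path_def by auto
  moreover have "Suc (?n - Suc (Suc i)) = ?n - Suc i" using i by simp
  ultimately have "(xs ! (?n - Suc i), xs ! (?n - Suc (Suc i))) \<in> E"
    using assms(2) by (metis symD)
  then show "(rev xs ! i, rev xs ! Suc i) \<in> E" using i by (simp add: rev_nth)
qed (use assms in \<open>auto simp: is_path_def\<close>)

lemma end_leaf:
  assumes T: "is_tree V E" and P: "is_path V E xs"
    and M: "\<And>ys. is_path V E ys \<Longrightarrow> length ys \<le> length xs"
    and L: "length xs \<ge> 2"
  shows "(last xs, y) \<in> E \<longleftrightarrow> y = xs ! (length xs - 2)"
proof -
  note tb = tree_basic[OF T]
  let ?n = "length xs"
  have ne: "xs \<noteq> []" using P unfolding is_path_def by simp
  have lx: "last xs = xs ! (?n - 1)" using ne by (simp add: last_conv_nth)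
  have edge: "\<And>i. Suc i < ?n \<Longrightarrow> (xs ! i, xs ! Suc i) \<in> E" using P unfolding is_path_def by blast
  show ?thesis
  proof
    assume y: "y = xs ! (?n - 2)"
    have "(xs ! (?n - 2), xs ! Suc (?n - 2)) \<in> E" using edge L by simp
    moreover have "Suc (?n - 2) = ?n - 1" using L by simp
    ultimately show "(last xs, y) \<in> E" using y lx tb(3) by (metis symD)
  next
    assume e: "(last xs, y) \<in> E"
    then have yV: "y \<in> V" using tb(2) by auto
    show "y = xs ! (?n - 2)"
    proof (cases "y \<in> set xs")
      case False
      have "is_path V E (xs @ [y])"
        unfolding is_path_def
      proof (intro conjI allI impI)
        fix i assume i: "Suc i < length (xs @ [y])"
        show "((xs @ [y]) ! i, (xs @ [y]) ! Suc i) \<in> E"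
        proof (cases "Suc i < ?n")
          case True then show ?thesis using edge by (simp add: nth_append)
        next
          case False
          then have "Suc i = ?n" using i by simp
          then have "i = ?n - 1" by simp
          then show ?thesis using e lx \<open>Suc i = ?n\<close> by (simp add: nth_append)
        qed
      qed (use P False yV in \<open>auto simp: is_path_def\<close>)
      then show ?thesis using M[of "xs @ [y]"] by simp
    next
      case True
      then obtain j where j: "j < ?n" "xs ! j = y" by (auto simp: in_set_conv_nth)
      have "j \<noteq> ?n - 1" using j e lx tb(4) by (metis irrefl_def)
      moreover have "\<not> j < ?n - 2"
      proof
        assume jl: "j < ?n - 2"
        have "is_cycle E (drop j xs)"
          unfolding is_cycle_def
        proof (intro conjI allI impI)
          show "3 \<le> length (drop j xs)" using jl by simp
          show "distinct (drop j xs)" using P by (simp add: is_path_def)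
          fix i assume "Suc i < length (drop j xs)"
          then show "(drop j xs ! i, drop j xs ! Suc i) \<in> E" using edge by simp
        next
          have "last (drop j xs) = last xs" using j by simp
          moreover have "hd (drop j xs) = y" using j by (simp add: hd_drop_conv_nth)
          ultimately show "(last (drop j xs), hd (drop j xs)) \<in> E" using e by simp
        qed
        then show False using tb(6) by blast
      qed
      ultimately have "j = ?n - 2" using j by linarith
      then show ?thesis using j by simp
    qed
  qed
qed

lemma leaf_exists:
  assumes T: "is_tree V E" and c: "card V \<ge> 2" and r: "r \<in> V"
  shows "\<exists>l p. l \<in> V \<and> l \<noteq> r \<and> (\<forall>y. (l,y) \<in> E \<longleftrightarrow> y = p)"
proof -
  note tb = tree_basic[OF T]
  obtain w where w: "(r,w) \<in> E" using tree_nbr[OF T c r] by blast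
  have "r \<noteq> w" using w tb(4) by (auto simp: irrefl_def)
  then have p0: "is_path V E [r,w]" using w tb(2) unfolding is_path_def
    by (auto simp: nth_Cons split: nat.splits)
  have bnd: "\<forall>ys. is_path V E ys \<longrightarrow> length ys < card V + 1"
  proof (intro allI impI)
    fix ys assume "is_path V E ys"
    then have "card (set ys) = length ys" "set ys \<subseteq> V" by (auto simp: is_path_def distinct_card)
    then show "length ys < card V + 1" using card_mono[OF tb(1) \<open>set ys \<subseteq> V\<close>] by simp
  qed
  obtain xs where xs: "is_path V E xs" and M: "\<And>ys. is_path V E ys \<Longrightarrow> length ys \<le> length xs"
    using Lattices_Big.ex_has_greatest_nat[of "is_path V E", OF p0 bnd] by blast
  have L: "length xs \<ge> 2" using M[OF p0] by simp
  have leaf1: "\<forall>y. (last xs, y) \<in> E \<longleftrightarrow> y = xs ! (length xs - 2)"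
    using end_leaf[OF T xs M L] by blast
  have xr: "is_path V E (rev xs)" using path_rev[OF xs tb(3)] .
  have leaf2: "\<forall>y. (last (rev xs), y) \<in> E \<longleftrightarrow> y = rev xs ! (length (rev xs) - 2)"
    using end_leaf[OF T xr _] M L by simp
  have ne: "xs \<noteq> []" using xs by (simp add: is_path_def)
  have "hd xs \<noteq> last xs"
  proof -
    have "hd xs = xs ! 0" "last xs = xs ! (length xs - 1)" using ne by (auto simp: hd_conv_nth last_conv_nth)
    moreover have "distinct xs" using xs by (simp add: is_path_def)
    ultimately show ?thesis using L ne nth_eq_iff_index_eq[of xs 0 "length xs - 1"] by simp
  qed
  moreover have "hd xs \<in> V" "last xs \<in> V" using xs ne by (auto simp: is_path_def)
  moreover have "last (rev xs) = hd xs" using ne by (simp add: last_rev)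
  ultimately show ?thesis
  proof (cases "hd xs = r")
    case True
    then have "last xs \<noteq> r" using \<open>hd xs \<noteq> last xs\<close> by simp
    then show ?thesis using leaf1 \<open>last xs \<in> V\<close> by blast
  next
    case False
    then show ?thesis using leaf2 \<open>hd xs \<in> V\<close> \<open>last (rev xs) = hd xs\<close> by metis
  qed
qed

lemma subtree:
  assumes T: "is_tree V E" and l: "l \<in> V" and leaf: "\<forall>y. (l,y) \<in> E \<longleftrightarrow> y = p"
    and r: "r \<in> V" "r \<noteq> l"
  shows "is_tree (V - {l}) (E \<inter> ((V - {l}) \<times> (V - {l})))"
proof -
  note tb = tree_basic[OF T]
  let ?V = "V - {l}" and ?E = "E \<inter> ((V - {l}) \<times> (V - {l}))"
  have pl: "(l,p) \<in> E" using leaf by simp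
  have conn: "(u,v) \<in> ?E\<^sup>*" if u: "u \<in> ?V" and v: "v \<in> ?V" for u v
  proof -
    have "(u,x) \<in> E\<^sup>* \<Longrightarrow> (x \<noteq> l \<longrightarrow> (u,x) \<in> ?E\<^sup>*) \<and> (x = l \<longrightarrow> (u,p) \<in> ?E\<^sup>*)" for x
    proof (induction rule: rtrancl_induct)
      case base then show ?case using u by simp
    next
      case (step x y)
      have xy: "x \<in> V" "y \<in> V" using step.hyps(2) tb(2) by auto
      show ?case
      proof (cases "x = l")
        case True
        then have "y = p" using leaf step.hyps(2) by blast
        moreover have "y \<noteq> l" using True step.hyps(2) tb(4) by (auto simp: irrefl_def)
        ultimately show ?thesis using step.IH True by simp
      next
        case False
        show ?thesis
        proof (cases "y = l")
          case True
          then have "(l, x) \<in> E" using step.hyps(2) tb(3) by (metis symD)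
          then have "x = p" using leaf by blast
          then show ?thesis using step.IH True False by simp
        next
          case False2: False
          have "(x,y) \<in> ?E" using step.hyps(2) xy False False2 by auto
          then show ?thesis using step.IH False False2 by (meson rtrancl.rtrancl_into_rtrancl)
        qed
      qed
    qed
    then show ?thesis using tb(5)[of u v] u v by auto
  qed
  have "\<not> is_cycle ?E xs" for xs
  proof
    assume "is_cycle ?E xs"
    then have "is_cycle E xs" unfolding is_cycle_def by auto
    then show False using tb(6) by blast
  qed
  then show ?thesis unfolding is_tree_def undirected_graph_def
    using tb conn r by (auto simp: sym_def irrefl_def)
qed


lemma restrict_col:
  assumes "H_coloring V E VH EH c" "V' \<subseteq> V"
  shows "H_coloring V' (E \<inter> (V' \<times> V')) VH EH (restrict c V')"
  using assms unfolding H_coloring_def by (auto simp: PiE_iff)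

lemma lift_step:
  assumes T: "is_tree V E" and l: "l \<in> V" and leaf: "\<forall>y. (l,y) \<in> E \<longleftrightarrow> y = p"
    and q: "(p,q) \<in> E" "q \<noteq> l"
    and st: "(c', d') \<in> Step (V - {l}) (E \<inter> ((V - {l}) \<times> (V - {l}))) VH EH"
    and c: "H_coloring V E VH EH c" and cc: "restrict c (V - {l}) = c'"
  shows "\<exists>d. restrict d (V - {l}) = d' \<and> H_coloring V E VH EH d \<and> (c,d) \<in> (Step V E VH EH)\<^sup>*"
proof -
  note tb = tree_basic[OF T]
  define V' where "V' = V - {l}"
  define E' where "E' = E \<inter> (V' \<times> V')"
  have st': "(c', d') \<in> Step V' E' VH EH" using st unfolding V'_def E'_def .
  from st' have hc': "H_coloring V' E' VH EH c'" and hd': "H_coloring V' E' VH EH d'"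
    and ex: "\<exists>v\<in>V'. \<forall>x\<in>V'. x \<noteq> v \<longrightarrow> c' x = d' x" unfolding Step_def by auto
  obtain v where v: "v \<in> V'" "\<And>x. x \<in> V' \<Longrightarrow> x \<noteq> v \<Longrightarrow> c' x = d' x" using ex by blast
  have lp: "(l,p) \<in> E" using leaf by simp
  have pl: "(p,l) \<in> E" using lp tb(3) by (metis symD)
  have qp: "(q,p) \<in> E" using q tb(3) by (metis symD)
  have pV: "p \<in> V" "q \<in> V" using lp q tb(2) by auto
  have pnl: "p \<noteq> l" using lp tb(4) by (auto simp: irrefl_def)
  have qnp: "q \<noteq> p" using q tb(4) by (auto simp: irrefl_def)
  have pV': "p \<in> V'" "q \<in> V'" using pV pnl q(2) by (auto simp: V'_def)
  have cval: "\<And>x. x \<in> V' \<Longrightarrow> c' x = c x" using cc by (auto simp: V'_def)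
  have cPi: "c \<in> V \<rightarrow>\<^sub>E VH" and cE: "\<And>u w. (u,w) \<in> E \<Longrightarrow> (c u, c w) \<in> EH"
    using c unfolding H_coloring_def by auto
  have dPi: "d' \<in> V' \<rightarrow>\<^sub>E VH" and dE: "\<And>u w. (u,w) \<in> E' \<Longrightarrow> (d' u, d' w) \<in> EH"
    using hd' unfolding H_coloring_def by auto
  have Ecases: "(u,w) \<in> E'" if "(u,w) \<in> E" "u \<noteq> l" "w \<noteq> l" for u w
    using that tb(2) by (auto simp: E'_def V'_def)
  have Eleft: "w = p" if "(l,w) \<in> E" for w using that leaf by blast
  have Eright: "u = p" if "(u,l) \<in> E" for u
  proof -
    have "(l,u) \<in> E" using that tb(3) by (metis symD)
    then show ?thesis using leaf by blast
  qed
  have ext: "H_coloring V E VH EH (d'(l := col)) \<and> restrict (d'(l := col)) V' = d'"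
    if col: "col \<in> VH" "(col, d' p) \<in> EH" "(d' p, col) \<in> EH" for col
  proof
    have "d'(l := col) \<in> V \<rightarrow>\<^sub>E VH"
      using dPi col(1) l by (auto simp: PiE_iff extensional_def V'_def)
    moreover have "((d'(l := col)) u, (d'(l := col)) w) \<in> EH" if uw: "(u,w) \<in> E" for u w
    proof (cases "u = l")
      case True
      then have "w = p" using Eleft uw by blast
      then show ?thesis using True col pnl by simp
    next
      case False
      show ?thesis
      proof (cases "w = l")
        case True
        then have "u = p" using Eright uw by blast
        then show ?thesis using True col pnl by simp
      next
        case False2: False
        then show ?thesis using False dE Ecases uw by simp
      qed
    qed
    ultimately show "H_coloring V E VH EH (d'(l := col))" unfolding H_coloring_def by (auto simp del: fun_upd_apply)
    show "restrict (d'(l := col)) V' = d'"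
    proof
      fix x show "restrict (d'(l := col)) V' x = d' x"
        using dPi by (cases "x \<in> V'") (auto simp: PiE_iff extensional_def V'_def)
    qed
  qed
  show ?thesis
  proof (cases "v = p")
    case False
    have cl: "c l \<in> VH" using cPi l by auto
    have dp: "d' p = c p" using v(2)[OF pV'(1)] False cval pV'(1) by simp
    have col: "(c l, d' p) \<in> EH" "(d' p, c l) \<in> EH" using cE lp pl dp by auto
    have e: "H_coloring V E VH EH (d'(l := c l))" "restrict (d'(l := c l)) V' = d'"
      using ext[OF cl col] by auto
    have "(c, d'(l := c l)) \<in> Step V E VH EH"
      unfolding Step_def
    proof (clarify, intro conjI bexI[of _ v])
      show "v \<in> V" using v(1) by (simp add: V'_def)
      show "\<forall>x\<in>V. x \<noteq> v \<longrightarrow> c x = (d'(l := c l)) x"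
      proof (intro ballI impI)
        fix x assume x: "x \<in> V" "x \<noteq> v"
        show "c x = (d'(l := c l)) x"
        proof (cases "x = l")
          case False
          then have "x \<in> V'" using x by (simp add: V'_def)
          then show ?thesis using v(2) x cval False by simp
        qed simp
      qed
    qed (use c e in auto)
    then show ?thesis using e unfolding V'_def by blast
  next
    case True
    define m where "m = c(l := c q)"
    have cq: "c q \<in> VH" using cPi pV by auto
    have dq: "d' q = c q" using v(2)[OF pV'(2)] True qnp cval pV'(2) by simp
    have col: "(c q, d' p) \<in> EH" "(d' p, c q) \<in> EH"
      using dE[of q p] dE[of p q] q qp pV' dq by (auto simp: E'_def)
    have e: "H_coloring V E VH EH (d'(l := c q))" "restrict (d'(l := c q)) V' = d'"
      using ext[OF cq col] by auto
    have hm: "H_coloring V E VH EH m"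
    proof -
      have "m \<in> V \<rightarrow>\<^sub>E VH" using cPi cq l by (auto simp: m_def PiE_iff extensional_def)
      moreover have "(m u, m w) \<in> EH" if uw: "(u,w) \<in> E" for u w
      proof (cases "u = l")
        case True
        then have "w = p" using Eleft uw by blast
        then show ?thesis using True cE[OF qp] pnl by (simp add: m_def)
      next
        case False
        show ?thesis
        proof (cases "w = l")
          case True
          then have "u = p" using Eright uw by blast
          then show ?thesis using True cE[OF q(1)] pnl by (simp add: m_def)
        next
          case False2: False
          then show ?thesis using False cE uw by (simp add: m_def)
        qed
      qed
      ultimately show ?thesis unfolding H_coloring_def by auto
    qed
    have s1: "(c, m) \<in> Step V E VH EH"
      unfolding Step_def using c hm l by (auto simp: m_def intro!: bexI[of _ l])
    have s2: "(m, d'(l := c q)) \<in> Step V E VH EH"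
      unfolding Step_def
    proof (clarify, intro conjI bexI[of _ p])
      show "\<forall>x\<in>V. x \<noteq> p \<longrightarrow> m x = (d'(l := c q)) x"
      proof (intro ballI impI)
        fix x assume x: "x \<in> V" "x \<noteq> p"
        show "m x = (d'(l := c q)) x"
        proof (cases "x = l")
          case False
          then have "x \<in> V'" using x by (simp add: V'_def)
          then show ?thesis using v(2) x cval False True by (simp add: m_def)
        qed (simp add: m_def)
      qed
    qed (use hm e pV in auto)
    have "(c, d'(l := c q)) \<in> (Step V E VH EH)\<^sup>*" using s1 s2 by auto
    then show ?thesis using e unfolding V'_def by blast
  qed
qed


lemma lift_star:
  assumes T: "is_tree V E" and l: "l \<in> V" and leaf: "\<forall>y. (l,y) \<in> E \<longleftrightarrow> y = p"
    and q: "(p,q) \<in> E" "q \<noteq> l"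
    and st: "(c', d') \<in> (Step (V - {l}) (E \<inter> ((V - {l}) \<times> (V - {l}))) VH EH)\<^sup>*"
  shows "\<forall>c. H_coloring V E VH EH c \<and> restrict c (V - {l}) = c' \<longrightarrow>
     (\<exists>d. restrict d (V - {l}) = d' \<and> H_coloring V E VH EH d \<and> (c,d) \<in> (Step V E VH EH)\<^sup>*)"
  using st
proof (induction rule: rtrancl_induct)
  case base then show ?case by blast
next
  case (step y z)
  show ?case
  proof (intro allI impI)
    fix c assume c: "H_coloring V E VH EH c \<and> restrict c (V - {l}) = c'"
    obtain d1 where d1: "restrict d1 (V - {l}) = y" "H_coloring V E VH EH d1"
      "(c,d1) \<in> (Step V E VH EH)\<^sup>*" using step.IH c by blast
    obtain d2 where d2: "restrict d2 (V - {l}) = z" "H_coloring V E VH EH d2"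
      "(d1,d2) \<in> (Step V E VH EH)\<^sup>*"
      using lift_step[OF T l leaf q step.hyps(2) d1(2) d1(1)] by blast
    show "\<exists>d. restrict d (V - {l}) = z \<and> H_coloring V E VH EH d \<and> (c,d) \<in> (Step V E VH EH)\<^sup>*"
      using d1 d2 by (intro exI[of _ d2]) (meson rtrancl_trans)
  qed
qed

lemma base2:
  fixes \<alpha> \<beta> :: "'a \<Rightarrow> 'b" and r :: 'a
  assumes H: "sym EH" "EH \<subseteq> VH \<times> VH"
    and T: "is_tree V E" and n: "card V = 2" and r: "r \<in> V"
    and a: "H_coloring V E VH EH \<alpha>" and b: "H_coloring V E VH EH \<beta>"
    and w: "(\<alpha> r, \<beta> r) \<in> (W2 EH)\<^sup>*"
  shows "(\<alpha>, \<beta>) \<in> (Step V E VH EH)\<^sup>*"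
proof -
  note tb = tree_basic[OF T]
  obtain s where rs: "(r,s) \<in> E" using tree_nbr[OF T _ r] n by auto
  have sr: "(s,r) \<in> E" using rs tb(3) by (metis symD)
  have sV: "s \<in> V" and snr: "s \<noteq> r" using rs tb(2,4) by (auto simp: irrefl_def)
  have V: "V = {r,s}"
  proof -
    have "{r,s} \<subseteq> V" using r sV by auto
    moreover have "card {r,s} = card V" using n snr by simp
    ultimately show ?thesis using card_subset_eq[OF tb(1)] by blast
  qed
  have Ecases: "(u,w) = (r,s) \<or> (u,w) = (s,r)" if "(u,w) \<in> E" for u w
    using that tb(2,4) V by (auto simp: irrefl_def)
  define col :: "'b \<Rightarrow> 'b \<Rightarrow> 'a \<Rightarrow> 'b" where "col x y = (\<lambda>v. if v = r then x else if v = s then y else undefined)" for x y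
  have colv: "H_coloring V E VH EH (col x y)" if xy: "(x,y) \<in> EH" for x y
  proof -
    have yx: "(y,x) \<in> EH" using xy H(1) by (metis symD)
    have "col x y \<in> V \<rightarrow>\<^sub>E VH" using xy H(2) V by (auto simp: col_def PiE_iff extensional_def)
    moreover have "(col x y u, col x y w) \<in> EH" if "(u,w) \<in> E" for u w
      using Ecases[OF that] xy yx snr by (auto simp: col_def)
    ultimately show ?thesis unfolding H_coloring_def by auto
  qed
  have step_s: "(col x y, col x y') \<in> Step V E VH EH" if "(x,y) \<in> EH" "(x,y') \<in> EH" for x y y'
    unfolding Step_def using colv[OF that(1)] colv[OF that(2)] V snr
    by (auto simp: col_def intro!: bexI[of _ s])
  have step_r: "(col x y, col x' y) \<in> Step V E VH EH" if "(x,y) \<in> EH" "(x',y) \<in> EH" for x x' y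
    unfolding Step_def using colv[OF that(1)] colv[OF that(2)] V snr
    by (auto simp: col_def intro!: bexI[of _ r])
  have chain: "(x,z) \<in> (W2 EH)\<^sup>* \<Longrightarrow> \<forall>y w. (x,y) \<in> EH \<longrightarrow> (z,w) \<in> EH \<longrightarrow> (col x y, col z w) \<in> (Step V E VH EH)\<^sup>*" for x z
  proof (induction rule: rtrancl_induct)
    case base
    show ?case using step_s by blast
  next
    case (step z' z)
    show ?case
    proof (intro allI impI)
      fix y w assume yw: "(x,y) \<in> EH" "(z,w) \<in> EH"
      obtain m where m: "(z',m) \<in> EH" "(m,z) \<in> EH" using step.hyps(2) unfolding W2_def by blast
      have zm: "(z,m) \<in> EH" using m(2) H(1) by (metis symD)
      have "(col x y, col z' m) \<in> (Step V E VH EH)\<^sup>*" using step.IH yw m by blast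
      moreover have "(col z' m, col z m) \<in> Step V E VH EH" using step_r m(1) zm by blast
      moreover have "(col z m, col z w) \<in> Step V E VH EH" using step_s zm yw(2) by blast
      ultimately show "(col x y, col z w) \<in> (Step V E VH EH)\<^sup>*" by auto
    qed
  qed
  have repr: "f = col (f r) (f s)" if "H_coloring V E VH EH f" for f
  proof
    fix v
    have "f \<in> extensional V" using that unfolding H_coloring_def by (simp add: PiE_iff)
    then show "f v = col (f r) (f s) v" using V by (auto simp: col_def extensional_def)
  qed
  have ae: "(\<alpha> r, \<alpha> s) \<in> EH" "(\<beta> r, \<beta> s) \<in> EH"
    using a b rs unfolding H_coloring_def by auto
  have "(col (\<alpha> r) (\<alpha> s), col (\<beta> r) (\<beta> s)) \<in> (Step V E VH EH)\<^sup>*" using chain[OF w] ae by blast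
  then show ?thesis using repr[OF a] repr[OF b] by simp
qed

lemma back_dir:
  assumes H: "undirected_graph VH EH"
  shows "card V = n \<Longrightarrow> is_tree V E \<Longrightarrow> 2 \<le> n \<Longrightarrow> r \<in> V \<Longrightarrow> H_coloring V E VH EH \<alpha>
    \<Longrightarrow> H_coloring V E VH EH \<beta> \<Longrightarrow> (\<alpha> r, \<beta> r) \<in> (W2 EH)\<^sup>* \<Longrightarrow> (\<alpha>, \<beta>) \<in> (Step V E VH EH)\<^sup>*"
proof (induction n arbitrary: V E \<alpha> \<beta> rule: less_induct)
  case (less n)
  have Hs: "sym EH" "EH \<subseteq> VH \<times> VH" using H unfolding undirected_graph_def by auto
  show ?case
  proof (cases "n = 2")
    case True
    then show ?thesis using base2[OF Hs less.prems(2) _ less.prems(4-7)] less.prems(1) by simp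
  next
    case False
    then have n3: "n \<ge> 3" using less.prems(3) by simp
    note T = less.prems(2)
    note tb = tree_basic[OF T]
    obtain l p where lp: "l \<in> V" "l \<noteq> r" "\<forall>y. (l,y) \<in> E \<longleftrightarrow> y = p"
      using leaf_exists[OF T _ less.prems(4)] less.prems(1,3) by blast
    define V' where "V' = V - {l}"
    define E' where "E' = E \<inter> (V' \<times> V')"
    have T': "is_tree V' E'" using subtree[OF T lp(1) lp(3) less.prems(4) lp(2)[symmetric]]
      unfolding V'_def E'_def by simp
    have cV': "card V' = n - 1" using less.prems(1) lp(1) tb(1) by (simp add: V'_def)
    have rV': "r \<in> V'" using less.prems(4) lp(2) by (simp add: V'_def)
    have lpe: "(l,p) \<in> E" using lp(3) by simp
    have pV': "p \<in> V'" using lpe tb(2,4) by (auto simp: V'_def irrefl_def)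
    have c2: "2 \<le> card V'" using cV' n3 by simp
    obtain q where q': "(p,q) \<in> E'" using tree_nbr[OF T' c2 pV'] by blast
    have q: "(p,q) \<in> E" "q \<noteq> l" using q' by (auto simp: E'_def V'_def)
    have V'V: "V' \<subseteq> V" by (auto simp: V'_def)
    have ra: "H_coloring V' E' VH EH (restrict \<alpha> V')" "H_coloring V' E' VH EH (restrict \<beta> V')"
      using restrict_col[OF less.prems(5) V'V] restrict_col[OF less.prems(6) V'V]
      by (auto simp: E'_def)
    have n1: "n - 1 < n" "2 \<le> n - 1" using n3 by auto
    have w': "(restrict \<alpha> V' r, restrict \<beta> V' r) \<in> (W2 EH)\<^sup>*" using rV' less.prems(7) by simp
    have "(restrict \<alpha> V', restrict \<beta> V') \<in> (Step V' E' VH EH)\<^sup>*"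
      by (rule less.IH[OF n1(1) cV' T' n1(2) rV' ra w'])
    then obtain d where d: "restrict d V' = restrict \<beta> V'" "H_coloring V E VH EH d"
      "(\<alpha>, d) \<in> (Step V E VH EH)\<^sup>*"
      using lift_star[OF T lp(1) lp(3) q, of "restrict \<alpha> V'" "restrict \<beta> V'" VH EH]
        less.prems(5) unfolding V'_def E'_def by blast
    have "(d, \<beta>) \<in> Step V E VH EH"
      unfolding Step_def
    proof (clarify, intro conjI bexI[of _ l])
      show "\<forall>x\<in>V. x \<noteq> l \<longrightarrow> d x = \<beta> x"
      proof (intro ballI impI)
        fix x assume "x \<in> V" "x \<noteq> l"
        then have "x \<in> V'" by (simp add: V'_def)
        then show "d x = \<beta> x" using fun_cong[OF d(1), of x] by simp
      qed
    qed (use d less.prems(6) lp(1) in auto)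
    then show ?thesis using d(3) by auto
  qed
qed

lemma fwd:
  assumes "(\<alpha>, c) \<in> (Step V E VH EH)\<^sup>*" "(r,s) \<in> E" "(s,r) \<in> E" "r \<noteq> s" "r \<in> V" "s \<in> V"
  shows "(\<alpha> r, c r) \<in> (W2 EH)\<^sup>*"
  using assms(1)
proof (induction rule: rtrancl_induct)
  case (step c d)
  from step.hyps(2) have hc: "H_coloring V E VH EH c" "H_coloring V E VH EH d"
    and ex: "\<exists>v\<in>V. \<forall>x\<in>V. x \<noteq> v \<longrightarrow> c x = d x" unfolding Step_def by auto
  obtain v where v: "v \<in> V" "\<forall>x\<in>V. x \<noteq> v \<longrightarrow> c x = d x" using ex by blast
  show ?case
  proof (cases "c r = d r")
    case True then show ?thesis using step.IH by simp
  next
    case False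
    then have "v = r" using v assms(5) by metis
    then have "c s = d s" using v assms(4,6) by auto
    moreover have "(c r, c s) \<in> EH" "(d s, d r) \<in> EH"
      using hc assms(2,3) unfolding H_coloring_def by auto
    ultimately have "(c r, d r) \<in> W2 EH" unfolding W2_def by auto
    then show ?thesis using step.IH by auto
  qed
qed simp

theorem proposition5:
  fixes VH :: "'b set" and EH :: "('b \<times> 'b) set"
    and VT :: "'a set" and ET :: "('a \<times> 'a) set"
    and r :: 'a and \<alpha> \<beta> :: "'a \<Rightarrow> 'b"
  assumes "undirected_graph VH EH"
    and "is_tree VT ET" and "card VT \<ge> 2" and "r \<in> VT"
    and "H_coloring VT ET VH EH \<alpha>" and "H_coloring VT ET VH EH \<beta>"
  shows "reconfigurable VT ET VH EH \<alpha> \<beta> \<longleftrightarrow> even_walk VH EH (\<alpha> r) (\<beta> r)"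
proof
  note tb = tree_basic[OF assms(2)]
  have Hs: "sym EH" "EH \<subseteq> VH \<times> VH" using assms(1) unfolding undirected_graph_def by auto
  assume "reconfigurable VT ET VH EH \<alpha> \<beta>"
  then have st: "(\<alpha>, \<beta>) \<in> (Step VT ET VH EH)\<^sup>*" by (rule recon_to_star)
  obtain s where rs: "(r,s) \<in> ET" using tree_nbr[OF assms(2-4)] by blast
  have sr: "(s,r) \<in> ET" using rs tb(3) by (metis symD)
  have "r \<noteq> s" using rs tb(4) by (auto simp: irrefl_def)
  moreover have "s \<in> VT" using rs tb(2) by auto
  ultimately have w: "(\<alpha> r, \<beta> r) \<in> (W2 EH)\<^sup>*" using fwd[OF st rs sr _ assms(4)] by blast
  have b: "\<beta> r \<in> VH" using assms(6,4) unfolding H_coloring_def by auto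
  show "even_walk VH EH (\<alpha> r) (\<beta> r)" by (rule W2_walk[OF w b Hs(2)])
next
  assume "even_walk VH EH (\<alpha> r) (\<beta> r)"
  then obtain xs where xs: "is_walk VH EH xs" "hd xs = \<alpha> r" "last xs = \<beta> r" "even (length xs - 1)"
    unfolding even_walk_def by blast
  have "(\<alpha> r, \<beta> r) \<in> (W2 EH)\<^sup>*" using walk_W2[OF xs(1,4)] xs(2,3) by simp
  then have "(\<alpha>, \<beta>) \<in> (Step VT ET VH EH)\<^sup>*"
    by (rule back_dir[OF assms(1) refl assms(2,3,4,5,6)])
  then show "reconfigurable VT ET VH EH \<alpha> \<beta>" by (rule star_to_recon[OF _ assms(5)])
qed

end
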